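(* Let $\rho$ be an $n$-qubit pure state, $S\subseteq[n]$ non-empty with $s=|S|$, and $K\ge2$. Let $U=\bigotimes_{i\in S}U_i$ with independent Haar-random $U_i\in U(2)$ (identity outside $S$), and conditioned on $U$ let $\mathbf{Z}_1,\dots,\mathbf{Z}_K\in\{0,1\}^s$ be independent outcomes with distribution $P_U(\mathbf{z})=\operatorname{tr}\big(U\rho U^\dagger(|\mathbf{z}\rangle\langle\mathbf{z}|\otimes\mathbb{I}_{[n]\setminus S})\big)$. Let $$\hat S^{(K)}=\frac{1}{K(K-1)}\sum_{\substack{k,k'=1\\k\ne k'}}^K\mathbb{1}[\mathbf{Z}_k=\mathbf{Z}_{k'}],$$ and set $P_2=\mathbb{E}_U\big[\sum_{\mathbf z}P_U(\mathbf z)^2\big]$, $P_3=\mathbb{E}_U\big[\sum_{\mathbf z}P_U(\mathbf z)^3\big]$, $P_{2,2}=\mathbb{E}_U\big[\big(\sum_{\mathbf z}P_U(\mathbf z)^2\big)^2\big]$. Then $$\operatorname{Var}[\hat S^{(K)}]=\frac{2P_2(1-P_2)+4(K-2)(P_3-P_2^2)}{K(K-1)}+\frac{(K-2)(K-3)(P_{2,2}-P_2^2)}{K(K-1)},$$ where the variance is over both the random unitary and the measurement outcomes.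
   Context: $[n]=\{1,\dots,n\}$ labels the qubits; $\mathbb{1}[A]$ is $1$ if $A$ holds and $0$ otherwise. *)

theory Defs
  imports "HOL-Probability.Probability"
begin

type_synonym mat2 = "bool \<Rightarrow> bool \<Rightarrow> complex"

definition mmult2 :: "mat2 \<Rightarrow> mat2 \<Rightarrow> mat2" where
  "mmult2 A B = (\<lambda>a b. \<Sum>c\<in>UNIV. A a c * B c b)"

definition unitary2 :: "mat2 set" where
  "unitary2 = {U. \<forall>a b. (\<Sum>c\<in>UNIV. cnj (U c a) * U c b) = (if a = b then 1 else 0)}"

text \<open>mu is the (normalised) Haar measure on U(2): a left-invariant probability
  measure on the Borel sets of U(2). (By uniqueness of Haar measure, this determines mu.)\<close>
definition haar_U2 :: "mat2 measure \<Rightarrow> bool" where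
  "haar_U2 \<mu> \<longleftrightarrow> prob_space \<mu> \<and> space \<mu> = unitary2 \<and>
     sets \<mu> = sets (restrict_space borel unitary2) \<and>
     (\<forall>W\<in>unitary2. distr \<mu> \<mu> (mmult2 W) = \<mu>)"

definition basis :: "nat \<Rightarrow> (nat \<Rightarrow> bool) set" where
  "basis n = {x. \<forall>i. i \<notin> {1..n} \<longrightarrow> \<not> x i}"

type_synonym qmat = "(nat \<Rightarrow> bool) \<Rightarrow> (nat \<Rightarrow> bool) \<Rightarrow> complex"

definition qmult :: "nat \<Rightarrow> qmat \<Rightarrow> qmat \<Rightarrow> qmat" where
  "qmult n A B = (\<lambda>x y. \<Sum>c\<in>basis n. A x c * B c y)"

definition qadj :: "qmat \<Rightarrow> qmat" where
  "qadj A = (\<lambda>x y. cnj (A y x))"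

definition qtrace :: "nat \<Rightarrow> qmat \<Rightarrow> complex" where
  "qtrace n A = (\<Sum>x\<in>basis n. A x x)"

definition pure_state :: "nat \<Rightarrow> qmat \<Rightarrow> bool" where
  "pure_state n \<rho> \<longleftrightarrow> (\<exists>\<psi> :: (nat \<Rightarrow> bool) \<Rightarrow> complex.
      (\<Sum>x\<in>basis n. (cmod (\<psi> x))\<^sup>2) = 1 \<and>
      (\<forall>x\<in>basis n. \<forall>y\<in>basis n. \<rho> x y = \<psi> x * cnj (\<psi> y)))"

definition tensorU :: "nat \<Rightarrow> nat set \<Rightarrow> (nat \<Rightarrow> mat2) \<Rightarrow> qmat" where
  "tensorU n S Us = (\<lambda>x y. (\<Prod>i\<in>S. Us i (x i) (y i)) *
      (\<Prod>i\<in>{1..n} - S. if x i = y i then 1 else 0))"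

definition outcomes :: "nat set \<Rightarrow> (nat \<Rightarrow> bool) set" where
  "outcomes S = {z. \<forall>i. i \<notin> S \<longrightarrow> \<not> z i}"

definition projz :: "nat set \<Rightarrow> (nat \<Rightarrow> bool) \<Rightarrow> qmat" where
  "projz S z = (\<lambda>x y. if x = y \<and> (\<forall>i\<in>S. x i = z i) then 1 else 0)"

definition PU :: "nat \<Rightarrow> nat set \<Rightarrow> qmat \<Rightarrow> (nat \<Rightarrow> mat2) \<Rightarrow> (nat \<Rightarrow> bool) \<Rightarrow> real" where
  "PU n S \<rho> Us z = Re (qtrace n (qmult n (qmult n (qmult n (tensorU n S Us) \<rho>)
       (qadj (tensorU n S Us))) (projz S z)))"

definition Ulaw :: "mat2 measure \<Rightarrow> nat set \<Rightarrow> (nat \<Rightarrow> mat2) measure" where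
  "Ulaw \<mu> S = PiM S (\<lambda>_. \<mu>)"

definition outcome_law :: "nat \<Rightarrow> nat set \<Rightarrow> qmat \<Rightarrow> (nat \<Rightarrow> mat2) \<Rightarrow> (nat \<Rightarrow> bool) measure" where
  "outcome_law n S \<rho> Us = density (count_space (outcomes S)) (\<lambda>z. ennreal (PU n S \<rho> Us z))"

definition joint_law :: "mat2 measure \<Rightarrow> nat \<Rightarrow> nat set \<Rightarrow> qmat \<Rightarrow> nat \<Rightarrow>
    ((nat \<Rightarrow> mat2) \<times> (nat \<Rightarrow> nat \<Rightarrow> bool)) measure" where
  "joint_law \<mu> n S \<rho> K =
     Ulaw \<mu> S \<bind> (\<lambda>Us. distr (PiM {1..K} (\<lambda>_. outcome_law n S \<rho> Us))
        (Ulaw \<mu> S \<Otimes>\<^sub>M PiM {1..K} (\<lambda>_. count_space (outcomes S)))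
        (\<lambda>Zs. (Us, Zs)))"

definition Shat :: "nat \<Rightarrow> (nat \<Rightarrow> nat \<Rightarrow> bool) \<Rightarrow> real" where
  "Shat K Zs = (1 / (real K * (real K - 1))) *
     (\<Sum>k\<in>{1..K}. \<Sum>k'\<in>{1..K} - {k}. if Zs k = Zs k' then 1 else 0)"

definition variance_of :: "'a measure \<Rightarrow> ('a \<Rightarrow> real) \<Rightarrow> real" where
  "variance_of M X = (\<integral>\<omega>. (X \<omega> - (\<integral>\<omega>'. X \<omega>' \<partial>M))\<^sup>2 \<partial>M)"

end

theory Submission
  imports Defs
begin

definition EE :: "nat set \<Rightarrow> 'a set \<Rightarrow> ('a \<Rightarrow> real) \<Rightarrow> ((nat \<Rightarrow> 'a) \<Rightarrow> real) \<Rightarrow> real" where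
  "EE I \<Omega> p F = (\<Sum>Zs\<in>PiE I (\<lambda>_. \<Omega>). (\<Prod>k\<in>I. p (Zs k)) * F Zs)"

lemma EE_prod:
  assumes "finite I" "finite \<Omega>"
  shows "EE I \<Omega> p (\<lambda>Zs. \<Prod>k\<in>I. g k (Zs k)) = (\<Prod>k\<in>I. \<Sum>y\<in>\<Omega>. p y * g k y)"
proof -
  have "(\<Prod>k\<in>I. \<Sum>y\<in>\<Omega>. p y * g k y) = (\<Sum>Zs\<in>PiE I (\<lambda>_. \<Omega>). \<Prod>k\<in>I. p (Zs k) * g k (Zs k))"
    using assms by (intro prod_sum_PiE) auto
  then show ?thesis by (simp add: EE_def prod.distrib)
qed

lemma EE_sum: "EE I \<Omega> p (\<lambda>Zs. \<Sum>j\<in>J. F j Zs) = (\<Sum>j\<in>J. EE I \<Omega> p (F j))"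
  unfolding EE_def by (simp add: sum_distrib_left sum.swap[of _ J])

lemma EE_cong: "(\<And>Zs. Zs \<in> PiE I (\<lambda>_. \<Omega>) \<Longrightarrow> F Zs = G Zs) \<Longrightarrow> EE I \<Omega> p F = EE I \<Omega> p G"
  unfolding EE_def by (auto intro!: sum.cong)

lemma EE_lin: "EE I \<Omega> p (\<lambda>Zs. a * F Zs + b * G Zs) = a * EE I \<Omega> p F + b * EE I \<Omega> p G"
  unfolding EE_def by (simp add: sum.distrib sum_distrib_left algebra_simps)

lemma EE_const: "EE I \<Omega> p (\<lambda>Zs. a) = a * EE I \<Omega> p (\<lambda>_. 1)"
  unfolding EE_def by (simp add: sum_distrib_left algebra_simps)

lemma EE_one:
  assumes "finite I" "finite \<Omega>" "(\<Sum>y\<in>\<Omega>. p y) = 1"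
  shows "EE I \<Omega> p (\<lambda>_. 1) = 1"
  using EE_prod[OF assms(1,2), of p "\<lambda>_ _. 1"] assms(3) by simp

definition ind :: "nat set \<Rightarrow> 'a \<Rightarrow> nat \<Rightarrow> 'a \<Rightarrow> real" where
  "ind A z k y = (if k \<in> A then (if y = z then 1 else 0) else 1)"

lemma X_rep:
  assumes "finite I" "Zs \<in> PiE I (\<lambda>_. \<Omega>)" "a \<in> I" "b \<in> I" "a \<noteq> b" "finite \<Omega>"
  shows "(if Zs a = Zs b then 1 else 0::real) = (\<Sum>z\<in>\<Omega>. \<Prod>k\<in>I. ind {a,b} z k (Zs k))"
proof -
  have "(\<Prod>k\<in>I. ind {a,b} z k (Zs k)) = (if Zs a = z then 1 else 0) * (if Zs b = z then 1 else 0)" for z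
  proof -
    have "(\<Prod>k\<in>I. ind {a,b} z k (Zs k)) = (\<Prod>k\<in>I \<inter> {k. k \<in> {a,b}}. (if Zs k = z then 1 else 0))"
      unfolding ind_def using assms(1) by (simp add: prod.If_cases)
    also have "I \<inter> {k. k \<in> {a,b}} = {a,b}" using assms by auto
    finally show ?thesis using assms(5) by simp
  qed
  then have "(\<Sum>z\<in>\<Omega>. \<Prod>k\<in>I. ind {a,b} z k (Zs k)) = (\<Sum>z\<in>\<Omega>. if z = Zs a then (if Zs b = Zs a then 1 else 0) else 0)"
    by (intro sum.cong) auto
  also have "\<dots> = (if Zs a = Zs b then 1 else 0)"
    using assms PiE_mem[OF assms(2,3)] by (auto simp: sum.delta)
  finally show ?thesis by simp
qed

lemma e_eval:
  assumes "finite \<Omega>" "z \<in> \<Omega>" "w \<in> \<Omega>" "(\<Sum>y\<in>\<Omega>. p y) = 1"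
  shows "(\<Sum>y\<in>\<Omega>. p y * (ind A z k y * ind B w k y)) =
    (if k \<in> A then (if k \<in> B then (if z = w then p z else 0) else p z) else (if k \<in> B then p w else 1))"
proof -
  have "p y * (ind A z k y * ind B w k y) =
    (if k \<in> A then (if k \<in> B then (if y = z then (if z = w then p z else 0) else 0) else (if y = z then p z else 0))
     else (if k \<in> B then (if y = w then p w else 0) else p y))" for y
    unfolding ind_def by auto
  then show ?thesis using assms by (simp add: sum.delta)
qed

lemma prod_pattern:
  assumes "finite I" "A \<subseteq> I" "B \<subseteq> I"
  shows "(\<Prod>k\<in>I. (if k \<in> A then (if k \<in> B then \<alpha> else \<beta>) else (if k \<in> B then \<gamma> else 1))) =
     \<alpha> ^ card (A \<inter> B) * \<beta> ^ card (A - B) * (\<gamma>::real) ^ card (B - A)"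
proof -
  have fA: "finite A" "finite B" using assms finite_subset by auto
  have "(\<Prod>k\<in>I. (if k \<in> A then (if k \<in> B then \<alpha> else \<beta>) else (if k \<in> B then \<gamma> else 1))) =
     (\<Prod>k\<in>I \<inter> {k. k \<in> A}. (if k \<in> B then \<alpha> else \<beta>)) * (\<Prod>k\<in>I \<inter> - {k. k \<in> A}. (if k \<in> B then \<gamma> else 1))"
    using assms(1) by (rule prod.If_cases)
  also have "I \<inter> {k. k \<in> A} = A" using assms by auto
  also have "(\<Prod>k\<in>A. (if k \<in> B then \<alpha> else \<beta>)) = \<alpha> ^ card (A \<inter> B) * \<beta> ^ card (A - B)"
    using fA by (simp add: prod.If_cases Int_def set_diff_eq Collect_conj_eq[symmetric])
  also have "(\<Prod>k\<in>I \<inter> - {k. k \<in> A}. (if k \<in> B then \<gamma> else 1)) = \<gamma> ^ card (B - A)"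
  proof -
    have "(\<Prod>k\<in>I \<inter> - {k. k \<in> A}. (if k \<in> B then \<gamma> else 1)) = (\<Prod>k\<in>(I \<inter> - {k. k \<in> A}) \<inter> {k. k \<in> B}. \<gamma>)"
      using assms(1) by (simp add: prod.If_cases)
    also have "(I \<inter> - {k. k \<in> A}) \<inter> {k. k \<in> B} = B - A" using assms by auto
    finally show ?thesis by simp
  qed
  finally show ?thesis by simp
qed

lemma card_cases:
  fixes a b c d :: nat
  assumes "a \<noteq> b" "c \<noteq> d"
  shows "real (card ({a,b} \<inter> {c,d})) = (if a = c then 1 else 0) + (if a = d then 1 else 0) + (if b = c then 1 else 0) + (if b = d then 1 else 0)
     \<and> ((if a = c then 1 else 0) * (if b = d then 1 else 0) + (if a = d then 1 else 0) * (if b = c then 1 else 0) :: real) = (if card ({a,b} \<inter> {c,d}) = 2 then 1 else 0)"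
  using assms by (cases "a=c"; cases "a=d"; cases "b=c"; cases "b=d"; simp add: insert_commute)

lemma EXX:
  assumes I: "finite I" and O: "finite \<Omega>" and p1: "(\<Sum>y\<in>\<Omega>. p y) = 1"
    and abcd: "a \<in> I" "b \<in> I" "c \<in> I" "d \<in> I" "a \<noteq> b" "c \<noteq> d"
  shows "EE I \<Omega> p (\<lambda>Zs. (if Zs a = Zs b then 1 else 0) * (if Zs c = Zs d then 1 else 0)) =
    (\<Sum>z\<in>\<Omega>. p z ^ 2)^2
    + ((if a = c then 1 else 0) + (if a = d then 1 else 0) + (if b = c then 1 else 0) + (if b = d then 1 else 0))
       * ((\<Sum>z\<in>\<Omega>. p z ^ 3) - (\<Sum>z\<in>\<Omega>. p z ^ 2)^2)
    + ((if a = c then 1 else 0) * (if b = d then 1 else 0) + (if a = d then 1 else 0) * (if b = c then 1 else 0))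
       * ((\<Sum>z\<in>\<Omega>. p z ^ 2) - 2 * (\<Sum>z\<in>\<Omega>. p z ^ 3) + (\<Sum>z\<in>\<Omega>. p z ^ 2)^2)"
proof -
  define A where "A = {a,b}"
  define B where "B = {c,d}"
  define m where "m = card (A \<inter> B)"
  have AB: "A \<subseteq> I" "B \<subseteq> I" using abcd by (auto simp: A_def B_def)
  have cA: "card A = 2" "card B = 2" using abcd by (auto simp: A_def B_def)
  have cAB: "card (A - B) = 2 - m" "card (B - A) = 2 - m"
    unfolding m_def using cA by (auto simp: A_def B_def card_Diff_subset_Int Int_commute)
  have m2: "m \<le> 2" unfolding m_def using cA card_mono[of A "A \<inter> B"] by (auto simp: A_def)
  have "EE I \<Omega> p (\<lambda>Zs. (if Zs a = Zs b then 1 else 0) * (if Zs c = Zs d then 1 else 0)) =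
     EE I \<Omega> p (\<lambda>Zs. \<Sum>z\<in>\<Omega>. \<Sum>w\<in>\<Omega>. \<Prod>k\<in>I. ind A z k (Zs k) * ind B w k (Zs k))"
  proof (rule EE_cong)
    fix Zs assume Zs: "Zs \<in> PiE I (\<lambda>_. \<Omega>)"
    show "(if Zs a = Zs b then 1 else 0) * (if Zs c = Zs d then 1 else 0) =
       (\<Sum>z\<in>\<Omega>. \<Sum>w\<in>\<Omega>. \<Prod>k\<in>I. ind A z k (Zs k) * ind B w k (Zs k))"
      unfolding X_rep[OF I Zs abcd(1,2,5) O] X_rep[OF I Zs abcd(3,4,6) O] A_def B_def
      by (simp add: sum_product prod.distrib)
  qed
  also have "\<dots> = (\<Sum>z\<in>\<Omega>. \<Sum>w\<in>\<Omega>. \<Prod>k\<in>I. \<Sum>y\<in>\<Omega>. p y * (ind A z k y * ind B w k y))"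
    unfolding EE_sum
  proof (intro sum.cong refl)
    fix z w
    show "EE I \<Omega> p (\<lambda>Zs. \<Prod>k\<in>I. ind A z k (Zs k) * ind B w k (Zs k)) =
      (\<Prod>k\<in>I. \<Sum>y\<in>\<Omega>. p y * (ind A z k y * ind B w k y))"
      using EE_prod[OF I O, of p "\<lambda>k y. ind A z k y * ind B w k y"] by simp
  qed
  also have "\<dots> = (\<Sum>z\<in>\<Omega>. \<Sum>w\<in>\<Omega>. (if z = w then p z else 0) ^ m * p z ^ (2 - m) * p w ^ (2 - m))"
  proof (intro sum.cong refl)
    fix z w assume zw: "z \<in> \<Omega>" "w \<in> \<Omega>"
    show "(\<Prod>k\<in>I. \<Sum>y\<in>\<Omega>. p y * (ind A z k y * ind B w k y)) = (if z = w then p z else 0) ^ m * p z ^ (2 - m) * p w ^ (2 - m)"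
      unfolding e_eval[OF O zw p1] prod_pattern[OF I AB] m_def cAB[unfolded m_def] ..
  qed
  also have "\<dots> = (if m = 0 then (\<Sum>z\<in>\<Omega>. p z ^ 2)^2 else if m = 1 then (\<Sum>z\<in>\<Omega>. p z ^ 3) else (\<Sum>z\<in>\<Omega>. p z ^ 2))"
  proof -
    consider "m = 0" | "m = 1" | "m = 2" using m2 by linarith
    then show ?thesis
    proof cases
      case 1 then show ?thesis by (simp add: power2_eq_square sum_product)
    next
      case 2
      have "(\<Sum>z\<in>\<Omega>. \<Sum>w\<in>\<Omega>. (if z = w then p z else 0) ^ m * p z ^ (2 - m) * p w ^ (2 - m))
         = (\<Sum>z\<in>\<Omega>. \<Sum>w\<in>\<Omega>. (if w = z then p z ^ 3 else 0))"
        using 2 by (intro sum.cong refl) (auto simp: power3_eq_cube)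
      then show ?thesis using 2 O by (simp add: sum.delta')
    next
      case 3
      have "(\<Sum>z\<in>\<Omega>. \<Sum>w\<in>\<Omega>. (if z = w then p z else 0) ^ m * p z ^ (2 - m) * p w ^ (2 - m))
         = (\<Sum>z\<in>\<Omega>. \<Sum>w\<in>\<Omega>. (if w = z then p z ^ 2 else 0))"
        using 3 by (intro sum.cong refl) auto
      then show ?thesis using 3 O by (simp add: sum.delta')
    qed
  qed
  finally show ?thesis
    using card_cases[OF abcd(5,6)] m2 unfolding m_def A_def B_def
    by (auto simp: algebra_simps)
qed

lemma cnt1: assumes "finite I" "x \<in> I"
  shows "(\<Sum>c\<in>I. \<Sum>d\<in>I-{c}. (if x = c then 1 else 0::real)) = real (card I) - 1"
proof -
  have "(\<Sum>c\<in>I. \<Sum>d\<in>I-{c}. (if x = c then 1 else 0::real)) = (\<Sum>c\<in>I. if x = c then (\<Sum>d\<in>I-{c}. 1::real) else 0)"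
    by (intro sum.cong refl) auto
  also have "\<dots> = real (card (I - {x}))" using assms by (simp add: sum.delta)
  also have "\<dots> = real (card I) - 1"
  proof -
    have c1: "card I \<ge> 1" using assms by (metis One_nat_def Suc_leI card_gt_0_iff empty_iff)
    have "card (I - {x}) = card I - 1" using assms(2) by (rule card_Diff_singleton)
    then show ?thesis using c1 by (simp add: of_nat_diff)
  qed
  finally show ?thesis .
qed

lemma cnt2: assumes "finite I" "x \<in> I"
  shows "(\<Sum>c\<in>I. \<Sum>d\<in>I-{c}. (if x = d then 1 else 0::real)) = real (card I) - 1"
proof -
  have "(\<Sum>c\<in>I. \<Sum>d\<in>I-{c}. (if x = d then 1 else 0::real)) = (\<Sum>c\<in>I. 1 - (if x = c then 1 else 0))"
    using assms by (intro sum.cong refl) (auto simp: sum.delta)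
  also have "\<dots> = real (card I) - 1" using assms by (simp add: sum_subtractf sum.delta)
  finally show ?thesis .
qed

lemma cnt3: assumes "finite I" "x \<in> I" "y \<in> I" "x \<noteq> y"
  shows "(\<Sum>c\<in>I. \<Sum>d\<in>I-{c}. (if x = c then 1 else 0::real) * (if y = d then 1 else 0)) = 1"
proof -
  have "(\<Sum>c\<in>I. \<Sum>d\<in>I-{c}. (if x = c then 1 else 0::real) * (if y = d then 1 else 0)) =
     (\<Sum>c\<in>I. if x = c then (\<Sum>d\<in>I-{c}. (if y = d then 1 else 0::real)) else 0)"
    by (intro sum.cong refl) auto
  also have "\<dots> = 1" using assms by (simp add: sum.delta)
  finally show ?thesis .
qed

lemma cnt3': assumes "finite I" "x \<in> I" "y \<in> I" "x \<noteq> y"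
  shows "(\<Sum>c\<in>I. \<Sum>d\<in>I-{c}. (if x = d then 1 else 0::real) * (if y = c then 1 else 0)) = 1"
  using cnt3[OF assms(1,3,2) assms(4)[symmetric]] by (simp add: mult.commute)

lemma cnt0: assumes "finite I" "x \<in> I"
  shows "(\<Sum>c\<in>I. \<Sum>d\<in>I-{c}. (1::real)) = real (card I) * (real (card I) - 1)"
proof -
  have c1: "card I \<ge> 1" using assms by (metis One_nat_def Suc_leI card_gt_0_iff empty_iff)
  have "(\<Sum>c\<in>I. \<Sum>d\<in>I-{c}. (1::real)) = (\<Sum>c\<in>I. real (card I) - 1)"
  proof (intro sum.cong refl)
    fix c assume "c \<in> I"
    then have "card (I - {c}) = card I - 1" by (rule card_Diff_singleton)
    then show "(\<Sum>d\<in>I-{c}. (1::real)) = real (card I) - 1" using c1 by (simp add: of_nat_diff)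
  qed
  then show ?thesis by simp
qed

lemma EE_scale: "EE I \<Omega> p (\<lambda>Zs. \<alpha> * F Zs) = \<alpha> * EE I \<Omega> p F"
  unfolding EE_def by (simp add: sum_distrib_left algebra_simps)

lemma inner_count:
  fixes Q R C :: real
  assumes "finite I" "a \<in> I" "b \<in> I" "a \<noteq> b"
  shows "(\<Sum>c\<in>I. \<Sum>d\<in>I-{c}. C + ((if a = c then 1 else 0) + (if a = d then 1 else 0) + (if b = c then 1 else 0) + (if b = d then 1 else 0)) * Q
      + ((if a = c then 1 else 0) * (if b = d then 1 else 0) + (if a = d then 1 else 0) * (if b = c then 1 else 0)) * R)
   = real (card I) * (real (card I) - 1) * C + 4 * (real (card I) - 1) * Q + 2 * R"
proof -
  let ?S = "\<lambda>f. (\<Sum>c\<in>I. \<Sum>d\<in>I-{c}. f c d :: real)"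
  have lin3: "?S (\<lambda>c d. C * u c d + Q * v c d + R * w c d) = C * ?S u + Q * ?S v + R * ?S w" for u v w
    by (simp add: sum.distrib sum_distrib_left)
  have lin4: "?S (\<lambda>c d. u1 c d + u2 c d + u3 c d + u4 c d) = ?S u1 + ?S u2 + ?S u3 + ?S u4" for u1 u2 u3 u4
    by (simp add: sum.distrib)
  have lin2: "?S (\<lambda>c d. u1 c d + u2 c d) = ?S u1 + ?S u2" for u1 u2
    by (simp add: sum.distrib)
  have "?S (\<lambda>c d. C + ((if a = c then 1 else 0) + (if a = d then 1 else 0) + (if b = c then 1 else 0) + (if b = d then 1 else 0)) * Q
      + ((if a = c then 1 else 0) * (if b = d then 1 else 0) + (if a = d then 1 else 0) * (if b = c then 1 else 0)) * R)
    = ?S (\<lambda>c d. C * 1 + Q * ((if a = c then 1 else 0) + (if a = d then 1 else 0) + (if b = c then 1 else 0) + (if b = d then 1 else 0))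
      + R * ((if a = c then 1 else 0) * (if b = d then 1 else 0) + (if a = d then 1 else 0) * (if b = c then 1 else 0)))"
    by (simp only: mult.commute mult_1_right)
  also have "\<dots> = C * ?S (\<lambda>c d. 1) + Q * (?S (\<lambda>c d. if a = c then 1 else 0) + ?S (\<lambda>c d. if a = d then 1 else 0) + ?S (\<lambda>c d. if b = c then 1 else 0) + ?S (\<lambda>c d. if b = d then 1 else 0))
      + R * (?S (\<lambda>c d. (if a = c then 1 else 0) * (if b = d then 1 else 0)) + ?S (\<lambda>c d. (if a = d then 1 else 0) * (if b = c then 1 else 0)))"
    unfolding lin3 lin4 lin2 ..
  also have "\<dots> = real (card I) * (real (card I) - 1) * C + 4 * (real (card I) - 1) * Q + 2 * R"
    unfolding cnt0[OF assms(1,2)] cnt1[OF assms(1,2)] cnt1[OF assms(1,3)] cnt2[OF assms(1,2)] cnt2[OF assms(1,3)]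
      cnt3[OF assms] cnt3'[OF assms(1,2,3,4)]
    by (simp add: algebra_simps)
  finally show ?thesis .
qed

lemma aux: "(x::real) > 0 \<Longrightarrow> (1/x)^2 * (x * X) = X / x"
  by (simp add: power2_eq_square field_simps)

lemma aux2: "(x::real) > 0 \<Longrightarrow> 1/x * x = 1"
  by simp

lemma Shat_moments:
  assumes K: "K \<ge> 2" and O: "finite \<Omega>" and p1: "(\<Sum>y\<in>\<Omega>. p y) = 1"
  shows "EE {1..K} \<Omega> p (Shat K) = (\<Sum>z\<in>\<Omega>. p z ^ 2)"
    and "EE {1..K} \<Omega> p (\<lambda>Zs. (Shat K Zs)^2) =
      (2 * (\<Sum>z\<in>\<Omega>. p z ^ 2) + 4 * (real K - 2) * (\<Sum>z\<in>\<Omega>. p z ^ 3)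
        + (real K - 2) * (real K - 3) * (\<Sum>z\<in>\<Omega>. p z ^ 2)^2) / (real K * (real K - 1))"
proof -
  define I where "I = {1..K}"
  define C where "C = (\<Sum>z\<in>\<Omega>. p z ^ 2)"
  define T where "T = (\<Sum>z\<in>\<Omega>. p z ^ 3)"
  define \<alpha> where "\<alpha> = 1 / (real K * (real K - 1))"
  have I: "finite I" "1 \<in> I" and cI: "card I = K" using K by (auto simp: I_def)
  have Kpos: "real K * (real K - 1) > 0" using K by simp
  let ?X = "\<lambda>a b Zs. (if Zs a = Zs b then 1 else 0::real)"
  have Sh: "Shat K = (\<lambda>Zs. \<alpha> * (\<Sum>a\<in>I. \<Sum>b\<in>I-{a}. ?X a b Zs))"
    unfolding Shat_def \<alpha>_def I_def by auto
  have EX: "EE I \<Omega> p (?X a b) = C" if "a \<in> I" "b \<in> I" "a \<noteq> b" for a b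
  proof -
    have "EE I \<Omega> p (?X a b) = EE I \<Omega> p (\<lambda>Zs. ?X a b Zs * ?X a b Zs)"
      by (rule EE_cong) auto
    also have "\<dots> = C"
      unfolding EXX[OF I(1) O p1 that(1,2,1,2,3,3)] C_def using that
      by (simp add: power2_eq_square algebra_simps)
    finally show ?thesis .
  qed
  show "EE {1..K} \<Omega> p (Shat K) = (\<Sum>z\<in>\<Omega>. p z ^ 2)"
  proof -
    have "EE I \<Omega> p (Shat K) = \<alpha> * (\<Sum>a\<in>I. \<Sum>b\<in>I-{a}. EE I \<Omega> p (?X a b))"
      unfolding Sh EE_scale EE_sum ..
    also have "\<dots> = \<alpha> * (\<Sum>a\<in>I. \<Sum>b\<in>I-{a}. C)"
      by (intro arg_cong[where f="\<lambda>x. \<alpha> * x"] sum.cong refl EX) auto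
    also have "\<dots> = \<alpha> * ((\<Sum>a\<in>I. \<Sum>b\<in>I-{a}. 1) * C)"
      by (simp only: sum_distrib_right mult_1_left)
    also have "\<dots> = \<alpha> * (real K * (real K - 1) * C)"
      using cnt0[OF I] cI by simp
    also have "\<dots> = (\<alpha> * (real K * (real K - 1))) * C" by (simp only: mult.assoc)
    also have "\<alpha> * (real K * (real K - 1)) = 1" using aux2[OF Kpos] unfolding \<alpha>_def .
    finally have "EE I \<Omega> p (Shat K) = C" by simp
    then show ?thesis by (simp add: I_def C_def)
  qed
  show "EE {1..K} \<Omega> p (\<lambda>Zs. (Shat K Zs)^2) =
      (2 * (\<Sum>z\<in>\<Omega>. p z ^ 2) + 4 * (real K - 2) * (\<Sum>z\<in>\<Omega>. p z ^ 3)
        + (real K - 2) * (real K - 3) * (\<Sum>z\<in>\<Omega>. p z ^ 2)^2) / (real K * (real K - 1))"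
  proof -
    have sq: "(Shat K Zs)^2 = \<alpha>^2 * (\<Sum>a\<in>I. \<Sum>b\<in>I-{a}. \<Sum>c\<in>I. \<Sum>d\<in>I-{c}. ?X a b Zs * ?X c d Zs)" for Zs
    proof -
      have "(\<Sum>a\<in>I. \<Sum>b\<in>I-{a}. ?X a b Zs) * (\<Sum>c\<in>I. \<Sum>d\<in>I-{c}. ?X c d Zs) = (\<Sum>a\<in>I. \<Sum>b\<in>I-{a}. \<Sum>c\<in>I. \<Sum>d\<in>I-{c}. ?X a b Zs * ?X c d Zs)"
        unfolding sum_distrib_right unfolding sum_distrib_left ..
      moreover have "(Shat K Zs)^2 = \<alpha>^2 * ((\<Sum>a\<in>I. \<Sum>b\<in>I-{a}. ?X a b Zs) * (\<Sum>c\<in>I. \<Sum>d\<in>I-{c}. ?X c d Zs))"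
        unfolding Sh power2_eq_square by (simp only: mult_ac)
      ultimately show ?thesis by simp
    qed
    have "EE I \<Omega> p (\<lambda>Zs. (Shat K Zs)^2) = \<alpha>^2 * (\<Sum>a\<in>I. \<Sum>b\<in>I-{a}. \<Sum>c\<in>I. \<Sum>d\<in>I-{c}. EE I \<Omega> p (\<lambda>Zs. ?X a b Zs * ?X c d Zs))"
      unfolding sq EE_scale EE_sum ..
    also have "\<dots> = \<alpha>^2 * (\<Sum>a\<in>I. \<Sum>b\<in>I-{a}. real K * (real K - 1) * C^2 + 4 * (real K - 1) * (T - C^2) + 2 * (C - 2 * T + C^2))"
    proof (intro arg_cong[where f="\<lambda>x. \<alpha>^2 * x"] sum.cong refl)
      fix a b assume ab: "a \<in> I" "b \<in> I - {a}"
      have "(\<Sum>c\<in>I. \<Sum>d\<in>I-{c}. EE I \<Omega> p (\<lambda>Zs. ?X a b Zs * ?X c d Zs)) =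
        (\<Sum>c\<in>I. \<Sum>d\<in>I-{c}. C^2 + ((if a = c then 1 else 0) + (if a = d then 1 else 0) + (if b = c then 1 else 0) + (if b = d then 1 else 0)) * (T - C^2)
      + ((if a = c then 1 else 0) * (if b = d then 1 else 0) + (if a = d then 1 else 0) * (if b = c then 1 else 0)) * (C - 2 * T + C^2))"
      proof (intro sum.cong refl)
        fix c d assume cd: "c \<in> I" "d \<in> I - {c}"
        show "EE I \<Omega> p (\<lambda>Zs. ?X a b Zs * ?X c d Zs) = C^2 + ((if a = c then 1 else 0) + (if a = d then 1 else 0) + (if b = c then 1 else 0) + (if b = d then 1 else 0)) * (T - C^2)
      + ((if a = c then 1 else 0) * (if b = d then 1 else 0) + (if a = d then 1 else 0) * (if b = c then 1 else 0)) * (C - 2 * T + C^2)"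
          using EXX[OF I(1) O p1, of a b c d] ab cd unfolding C_def T_def by simp
      qed
      also have "\<dots> = real K * (real K - 1) * C^2 + 4 * (real K - 1) * (T - C^2) + 2 * (C - 2 * T + C^2)"
      proof -
        have b: "b \<in> I" "a \<noteq> b" using ab by auto
        show ?thesis using inner_count[OF I(1) ab(1) b, of "C^2" "T - C^2" "C - 2 * T + C^2"] unfolding cI .
      qed
      finally show "(\<Sum>c\<in>I. \<Sum>d\<in>I-{c}. EE I \<Omega> p (\<lambda>Zs. ?X a b Zs * ?X c d Zs)) = real K * (real K - 1) * C^2 + 4 * (real K - 1) * (T - C^2) + 2 * (C - 2 * T + C^2)" .
    qed
    also have "\<dots> = \<alpha>^2 * ((\<Sum>a\<in>I. \<Sum>b\<in>I-{a}. 1) * (real K * (real K - 1) * C^2 + 4 * (real K - 1) * (T - C^2) + 2 * (C - 2 * T + C^2)))"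
      by (simp only: sum_distrib_right mult_1_left)
    also have "\<dots> = \<alpha>^2 * (real K * (real K - 1) * (real K * (real K - 1) * C^2 + 4 * (real K - 1) * (T - C^2) + 2 * (C - 2 * T + C^2)))"
      unfolding cnt0[OF I] cI ..
    also have "\<dots> = (real K * (real K - 1) * C^2 + 4 * (real K - 1) * (T - C^2) + 2 * (C - 2 * T + C^2)) / (real K * (real K - 1))"
      using aux[OF Kpos] unfolding \<alpha>_def .
    also have "real K * (real K - 1) * C^2 + 4 * (real K - 1) * (T - C^2) + 2 * (C - 2 * T + C^2) = 2 * C + 4 * (real K - 2) * T + (real K - 2) * (real K - 3) * C^2"
      by (simp add: algebra_simps)
    finally have "EE I \<Omega> p (\<lambda>Zs. (Shat K Zs)^2) = (2 * C + 4 * (real K - 2) * T + (real K - 2) * (real K - 3) * C^2) / (real K * (real K - 1))" .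
    then show ?thesis unfolding I_def C_def T_def .
  qed
qed

lemma finite_basis: "finite (basis n)"
proof -
  have "basis n \<subseteq> (\<lambda>A i. i \<in> A) ` Pow {1..n}"
  proof
    fix x assume "x \<in> basis n"
    then have "x = (\<lambda>i. i \<in> {i. x i})" "{i. x i} \<in> Pow {1..n}" by (auto simp: basis_def)
    then show "x \<in> (\<lambda>A i. i \<in> A) ` Pow {1..n}" by blast
  qed
  then show ?thesis by (rule finite_subset) auto
qed

lemma basis_sum_prod:
  fixes g :: "nat \<Rightarrow> bool \<Rightarrow> 'c::comm_semiring_1"
  shows "(\<Sum>x\<in>basis n. \<Prod>i\<in>{1..n}. g i (x i)) = (\<Prod>i\<in>{1..n}. \<Sum>b\<in>UNIV. g i b)"
proof -
  have "(\<Prod>i\<in>{1..n}. \<Sum>b\<in>UNIV. g i b) = (\<Sum>f\<in>PiE {1..n} (\<lambda>_. UNIV). \<Prod>i\<in>{1..n}. g i (f i))"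
    by (intro prod_sum_PiE) auto
  also have "\<dots> = (\<Sum>x\<in>basis n. \<Prod>i\<in>{1..n}. g i (x i))"
    by (rule sum.reindex_bij_witness[of _ "\<lambda>x. restrict x {1..n}" "\<lambda>f i. if i \<in> {1..n} then f i else False"])
       (auto simp: basis_def PiE_def extensional_def fun_eq_iff)
  finally show ?thesis by simp
qed

lemma tensorU_prod:
  assumes "S \<subseteq> {1..n}"
  shows "tensorU n S Us x c = (\<Prod>i\<in>{1..n}. (if i \<in> S then Us i (x i) (c i) else (if x i = c i then 1 else 0)))"
proof -
  have "(\<Prod>i\<in>{1..n}. (if i \<in> S then Us i (x i) (c i) else (if x i = c i then 1 else 0))) =
     (\<Prod>i\<in>{1..n} \<inter> {i. i \<in> S}. Us i (x i) (c i)) * (\<Prod>i\<in>{1..n} \<inter> - {i. i \<in> S}. (if x i = c i then 1 else 0))"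
    by (rule prod.If_cases) simp
  also have "{1..n} \<inter> {i. i \<in> S} = S" using assms by auto
  also have "{1..n} \<inter> - {i. i \<in> S} = {1..n} - S" by auto
  finally show ?thesis unfolding tensorU_def by simp
qed

lemma tensor_unitary:
  assumes S: "S \<subseteq> {1..n}" and U: "\<forall>i\<in>S. Us i \<in> unitary2" and cd: "c \<in> basis n" "d \<in> basis n"
  shows "(\<Sum>x\<in>basis n. tensorU n S Us x c * cnj (tensorU n S Us x d)) = (if c = d then 1 else 0)"
proof -
  define u where "u i a b = (if i \<in> S then Us i a b else (if a = b then 1 else 0))" for i a b
  have "(\<Sum>x\<in>basis n. tensorU n S Us x c * cnj (tensorU n S Us x d)) =
      (\<Sum>x\<in>basis n. \<Prod>i\<in>{1..n}. u i (x i) (c i) * cnj (u i (x i) (d i)))"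
    unfolding tensorU_prod[OF S] u_def[symmetric] by (simp add: prod.distrib)
  also have "\<dots> = (\<Prod>i\<in>{1..n}. \<Sum>b\<in>UNIV. u i b (c i) * cnj (u i b (d i)))"
    by (rule basis_sum_prod)
  also have "\<dots> = (\<Prod>i\<in>{1..n}. (if c i = d i then 1 else 0))"
  proof (intro prod.cong refl)
    fix i assume "i \<in> {1..n}"
    show "(\<Sum>b\<in>UNIV. u i b (c i) * cnj (u i b (d i))) = (if c i = d i then 1 else 0)"
    proof (cases "i \<in> S")
      case True
      then have uni: "(\<Sum>b\<in>UNIV. cnj (Us i b (c i)) * Us i b (d i)) = (if c i = d i then 1 else 0)"
        using U unfolding unitary2_def by auto
      have "(\<Sum>b\<in>UNIV. u i b (c i) * cnj (u i b (d i))) = cnj (\<Sum>b\<in>UNIV. cnj (Us i b (c i)) * Us i b (d i))"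
        using True unfolding u_def by (simp add: cnj_sum)
      then show ?thesis using uni by simp
    next
      case False
      then show ?thesis unfolding u_def by (simp add: UNIV_bool)
    qed
  qed
  also have "\<dots> = (if c = d then 1 else 0)"
  proof (cases "c = d")
    case False
    then obtain j where j: "c j \<noteq> d j" by auto
    then have "j \<in> {1..n}" using cd unfolding basis_def by auto
    then show ?thesis using j False by (auto intro!: prod_zero)
  qed simp
  finally show ?thesis .
qed

definition phi :: "nat \<Rightarrow> nat set \<Rightarrow> (nat \<Rightarrow> mat2) \<Rightarrow> ((nat \<Rightarrow> bool) \<Rightarrow> complex) \<Rightarrow> (nat \<Rightarrow> bool) \<Rightarrow> complex" where
  "phi n S Us \<psi> x = (\<Sum>c\<in>basis n. tensorU n S Us x c * \<psi> c)"

lemma PU_formula: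
  assumes psi: "\<forall>x\<in>basis n. \<forall>y\<in>basis n. \<rho> x y = \<psi> x * cnj (\<psi> y)"
  shows "PU n S \<rho> Us z = (\<Sum>x\<in>basis n. if (\<forall>i\<in>S. x i = z i) then (cmod (phi n S Us \<psi> x))^2 else 0)"
proof -
  let ?U = "tensorU n S Us"
  let ?\<phi> = "phi n S Us \<psi>"
  have M1: "qmult n ?U \<rho> x d = ?\<phi> x * cnj (\<psi> d)" if "d \<in> basis n" for x d
  proof -
    have "qmult n ?U \<rho> x d = (\<Sum>c\<in>basis n. ?U x c * \<psi> c * cnj (\<psi> d))"
      unfolding qmult_def using psi that by (intro sum.cong refl) (auto simp: mult.assoc)
    then show ?thesis unfolding phi_def by (simp add: sum_distrib_right)
  qed
  have M2: "qmult n (qmult n ?U \<rho>) (qadj ?U) x x = ?\<phi> x * cnj (?\<phi> x)" for x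
  proof -
    have "qmult n (qmult n ?U \<rho>) (qadj ?U) x x = (\<Sum>d\<in>basis n. ?\<phi> x * cnj (?U x d * \<psi> d))"
      unfolding qmult_def[of n "qmult n ?U \<rho>"] qadj_def using M1 by (intro sum.cong refl) auto
    also have "\<dots> = ?\<phi> x * cnj (?\<phi> x)"
      unfolding phi_def[of n S Us \<psi> x] by (simp add: sum_distrib_left)
    finally show ?thesis .
  qed
  have M3: "qmult n A (projz S z) x x = (if (\<forall>i\<in>S. x i = z i) then A x x else 0)" if "x \<in> basis n" for A x
  proof -
    have "qmult n A (projz S z) x x = (\<Sum>c\<in>basis n. if c = x then (if (\<forall>i\<in>S. x i = z i) then A x x else 0) else 0)"
      unfolding qmult_def projz_def by (intro sum.cong refl) auto
    then show ?thesis using that finite_basis by (simp add: sum.delta)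
  qed
  have "PU n S \<rho> Us z = Re (\<Sum>x\<in>basis n. (if (\<forall>i\<in>S. x i = z i) then ?\<phi> x * cnj (?\<phi> x) else 0))"
    unfolding PU_def qtrace_def
  proof (intro arg_cong[where f=Re] sum.cong refl)
    fix x assume x: "x \<in> basis n"
    show "qmult n (qmult n (qmult n ?U \<rho>) (qadj ?U)) (projz S z) x x = (if (\<forall>i\<in>S. x i = z i) then ?\<phi> x * cnj (?\<phi> x) else 0)"
      unfolding M3[OF x] M2 ..
  qed
  also have "\<dots> = (\<Sum>x\<in>basis n. if (\<forall>i\<in>S. x i = z i) then (cmod (?\<phi> x))^2 else 0)"
    unfolding Re_sum by (intro sum.cong refl) (auto simp: complex_norm_square[symmetric])
  finally show ?thesis .
qed

lemma PU_nonneg: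
  assumes psi: "\<forall>x\<in>basis n. \<forall>y\<in>basis n. \<rho> x y = \<psi> x * cnj (\<psi> y)"
  shows "PU n S \<rho> Us z \<ge> 0"
  unfolding PU_formula[OF psi] by (intro sum_nonneg) auto

lemma PU_sum:
  assumes psi: "\<forall>x\<in>basis n. \<forall>y\<in>basis n. \<rho> x y = \<psi> x * cnj (\<psi> y)"
    and norm: "(\<Sum>x\<in>basis n. (cmod (\<psi> x))\<^sup>2) = 1"
    and S: "S \<subseteq> {1..n}" and U: "\<forall>i\<in>S. Us i \<in> unitary2"
  shows "(\<Sum>z\<in>outcomes S. PU n S \<rho> Us z) = 1"
proof -
  let ?U = "tensorU n S Us"
  let ?\<phi> = "phi n S Us \<psi>"
  have fO: "finite (outcomes S)"
  proof -
    have "outcomes S \<subseteq> (\<lambda>A i. i \<in> A) ` Pow S"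
    proof
      fix x assume "x \<in> outcomes S"
      then have "x = (\<lambda>i. i \<in> {i. x i})" "{i. x i} \<in> Pow S" by (auto simp: outcomes_def)
      then show "x \<in> (\<lambda>A i. i \<in> A) ` Pow S" by blast
    qed
    moreover have "finite S" using S finite_subset by blast
    ultimately show ?thesis using finite_subset by blast
  qed
  have one: "(\<Sum>z\<in>outcomes S. if (\<forall>i\<in>S. x i = z i) then r else 0) = r" for x and r :: real
  proof -
    let ?z = "\<lambda>i. i \<in> S \<and> x i"
    have "(\<Sum>z\<in>outcomes S. if (\<forall>i\<in>S. x i = z i) then r else 0) = (\<Sum>z\<in>outcomes S. if z = ?z then r else 0)"
      by (intro sum.cong refl) (auto simp: outcomes_def fun_eq_iff)
    also have "\<dots> = r" using fO by (simp add: sum.delta' outcomes_def)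
    finally show ?thesis .
  qed
  have "(\<Sum>z\<in>outcomes S. PU n S \<rho> Us z) = (\<Sum>x\<in>basis n. (cmod (?\<phi> x))^2)"
    unfolding PU_formula[OF psi] by (subst sum.swap) (simp only: one)
  also have "complex_of_real \<dots> = (\<Sum>x\<in>basis n. ?\<phi> x * cnj (?\<phi> x))"
    by (simp only: of_real_sum complex_norm_square)
  also have "\<dots> = (\<Sum>x\<in>basis n. \<Sum>c\<in>basis n. \<Sum>d\<in>basis n. \<psi> c * cnj (\<psi> d) * (?U x c * cnj (?U x d)))"
    unfolding phi_def cnj_sum sum_product by (intro sum.cong refl) (simp add: mult_ac)
  also have "\<dots> = (\<Sum>c\<in>basis n. \<Sum>d\<in>basis n. \<psi> c * cnj (\<psi> d) * (\<Sum>x\<in>basis n. ?U x c * cnj (?U x d)))"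
  proof -
    have "(\<Sum>x\<in>basis n. \<Sum>c\<in>basis n. \<Sum>d\<in>basis n. \<psi> c * cnj (\<psi> d) * (?U x c * cnj (?U x d)))
      = (\<Sum>c\<in>basis n. \<Sum>x\<in>basis n. \<Sum>d\<in>basis n. \<psi> c * cnj (\<psi> d) * (?U x c * cnj (?U x d)))"
      by (rule sum.swap)
    also have "\<dots> = (\<Sum>c\<in>basis n. \<Sum>d\<in>basis n. \<Sum>x\<in>basis n. \<psi> c * cnj (\<psi> d) * (?U x c * cnj (?U x d)))"
      by (intro sum.cong refl sum.swap)
    finally show ?thesis by (simp only: sum_distrib_left)
  qed
  also have "\<dots> = (\<Sum>c\<in>basis n. \<Sum>d\<in>basis n. if d = c then \<psi> c * cnj (\<psi> c) else 0)"
    by (intro sum.cong refl) (auto simp: tensor_unitary[OF S U])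
  also have "\<dots> = (\<Sum>c\<in>basis n. \<psi> c * cnj (\<psi> c))"
    using finite_basis by (simp add: sum.delta)
  also have "\<dots> = complex_of_real (\<Sum>x\<in>basis n. (cmod (\<psi> x))\<^sup>2)"
    by (simp only: of_real_sum complex_norm_square)
  finally show ?thesis using norm by (metis of_real_eq_1_iff)
qed

lemma PiE_single_eq:
  assumes "x \<in> extensional I"
  shows "PiE I (\<lambda>k. {x k}) = {x}"
proof
  show "PiE I (\<lambda>k. {x k}) \<subseteq> {x}"
  proof
    fix y assume y: "y \<in> PiE I (\<lambda>k. {x k})"
    then have "y = x" using assms by (intro extensionalityI[of _ I]) (auto simp: PiE_iff)
    then show "y \<in> {x}" by simp
  qed
  show "{x} \<subseteq> PiE I (\<lambda>k. {x k})" using assms by (auto simp: PiE_iff)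
qed

lemma sets_PiM_count:
  assumes I: "finite I" and O: "finite \<Omega>"
  shows "sets (PiM I (\<lambda>_. count_space \<Omega>)) = Pow (PiE I (\<lambda>_. \<Omega>))"
proof
  show "sets (PiM I (\<lambda>_. count_space \<Omega>)) \<subseteq> Pow (PiE I (\<lambda>_. \<Omega>))"
    using sets.sets_into_space[of _ "PiM I (\<lambda>_. count_space \<Omega>)"] by (auto simp: space_PiM)
  show "Pow (PiE I (\<lambda>_. \<Omega>)) \<subseteq> sets (PiM I (\<lambda>_. count_space \<Omega>))"
  proof
    fix B assume B: "B \<in> Pow (PiE I (\<lambda>_. \<Omega>))"
    have fin: "finite (PiE I (\<lambda>_. \<Omega>))" using I O by (simp add: finite_PiE)
    have single: "{x} \<in> sets (PiM I (\<lambda>_. count_space \<Omega>))" if x: "x \<in> PiE I (\<lambda>_. \<Omega>)" for x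
    proof -
      have "{x} = PiE I (\<lambda>k. {x k})"
        using x by (intro PiE_single_eq[symmetric]) (simp add: PiE_def)
      also have "\<dots> \<in> sets (PiM I (\<lambda>_. count_space \<Omega>))"
        using x I by (intro sets_PiM_I_finite) auto
      finally show ?thesis .
    qed
    have "B = (\<Union>x\<in>B. {x})" by auto
    also have "\<dots> \<in> sets (PiM I (\<lambda>_. count_space \<Omega>))"
      using B fin single by (intro sets.finite_UN) (auto dest: finite_subset)
    finally show "B \<in> sets (PiM I (\<lambda>_. count_space \<Omega>))" .
  qed
qed

lemma emeasure_density_count_single:
  assumes "finite \<Omega>" "a \<in> \<Omega>"
  shows "emeasure (density (count_space \<Omega>) f) {a} = f a"
proof -
  have "emeasure (density (count_space \<Omega>) f) {a} = (\<integral>\<^sup>+ x. f x * indicator {a} x \<partial>count_space \<Omega>)"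
    using assms by (intro emeasure_density) auto
  also have "(\<lambda>x. f x * indicator {a} x) = (\<lambda>x. if x = a then f a else 0)"
    by (auto simp: indicator_def fun_eq_iff)
  also have "(\<integral>\<^sup>+ x. (if x = a then f a else 0) \<partial>count_space \<Omega>) = (\<Sum>x\<in>\<Omega>. if x = a then f a else 0)"
    by (rule nn_integral_count_space_finite[OF assms(1)])
  also have "\<dots> = f a" by (subst sum.delta[OF assms(1)]) (simp add: assms(2))
  finally show ?thesis .
qed

lemma prob_space_discrete:
  assumes O: "finite \<Omega>" and p0: "\<And>z. z \<in> \<Omega> \<Longrightarrow> p z \<ge> 0" and p1: "(\<Sum>z\<in>\<Omega>. p z) = 1"
  shows "prob_space (density (count_space \<Omega>) (\<lambda>z. ennreal (p z)))"
proof (rule prob_spaceI)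
  have "emeasure (density (count_space \<Omega>) (\<lambda>z. ennreal (p z))) \<Omega> = (\<integral>\<^sup>+ x. ennreal (p x) * indicator \<Omega> x \<partial>count_space \<Omega>)"
    by (intro emeasure_density) auto
  also have "\<dots> = (\<Sum>x\<in>\<Omega>. ennreal (p x))" using O by (simp add: nn_integral_count_space_finite)
  also have "\<dots> = 1" using p0 p1 by simp
  finally show "emeasure (density (count_space \<Omega>) (\<lambda>z. ennreal (p z))) (space (density (count_space \<Omega>) (\<lambda>z. ennreal (p z)))) = 1"
    by simp
qed

lemma PiM_discrete:
  assumes I: "finite I" and O: "finite \<Omega>" and p0: "\<And>z. z \<in> \<Omega> \<Longrightarrow> p z \<ge> 0" and p1: "(\<Sum>z\<in>\<Omega>. p z) = 1"
  shows "PiM I (\<lambda>_. density (count_space \<Omega>) (\<lambda>z. ennreal (p z))) =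
    density (count_space (PiE I (\<lambda>_. \<Omega>))) (\<lambda>Zs. ennreal (\<Prod>k\<in>I. p (Zs k)))"
proof -
  let ?D = "density (count_space \<Omega>) (\<lambda>z. ennreal (p z))"
  interpret D: prob_space ?D using prob_space_discrete[OF O p0 p1] .
  interpret P: product_sigma_finite "\<lambda>_. ?D"
    unfolding product_sigma_finite_def using D.sigma_finite_measure_axioms by simp
  have fin: "finite (PiE I (\<lambda>_. \<Omega>))" using I O by (simp add: finite_PiE)
  show ?thesis
  proof (rule measure_eqI_finite[OF _ _ fin])
    show "sets (PiM I (\<lambda>_. ?D)) = Pow (PiE I (\<lambda>_. \<Omega>))"
      using sets_PiM_count[OF I O] sets_PiM_cong[of I I "\<lambda>_. ?D" "\<lambda>_. count_space \<Omega>"] by simp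
    show "sets (density (count_space (PiE I (\<lambda>_. \<Omega>))) (\<lambda>Zs. ennreal (\<Prod>k\<in>I. p (Zs k)))) = Pow (PiE I (\<lambda>_. \<Omega>))"
      by simp
  next
    fix x assume x: "x \<in> PiE I (\<lambda>_. \<Omega>)"
    have "{x} = PiE I (\<lambda>k. {x k})"
      using x by (intro PiE_single_eq[symmetric]) (simp add: PiE_def)
    then have "emeasure (PiM I (\<lambda>_. ?D)) {x} = (\<Prod>k\<in>I. emeasure ?D {x k})"
      using x I by (simp only:) (rule P.emeasure_PiM[OF I], auto simp: PiE_iff)
    also have "\<dots> = (\<Prod>k\<in>I. ennreal (p (x k)))"
      using x O by (intro prod.cong refl emeasure_density_count_single) auto
    also have "\<dots> = ennreal (\<Prod>k\<in>I. p (x k))"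
      using x p0 by (intro prod_ennreal) auto
    also have "\<dots> = emeasure (density (count_space (PiE I (\<lambda>_. \<Omega>))) (\<lambda>Zs. ennreal (\<Prod>k\<in>I. p (Zs k)))) {x}"
      using x fin by (simp add: emeasure_density_count_single)
    finally show "emeasure (PiM I (\<lambda>_. ?D)) {x} = emeasure (density (count_space (PiE I (\<lambda>_. \<Omega>))) (\<lambda>Zs. ennreal (\<Prod>k\<in>I. p (Zs k)))) {x}" .
  qed
qed

lemma space_Ulaw: "haar_U2 \<mu> \<Longrightarrow> space (Ulaw \<mu> S) = PiE S (\<lambda>_. unitary2)"
  by (simp add: Ulaw_def space_PiM haar_U2_def)

lemma entry_meas:
  assumes H: "haar_U2 \<mu>" and i: "i \<in> S"
  shows "(\<lambda>Us. Us i a b) \<in> borel_measurable (Ulaw \<mu> S)"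
proof -
  have c: "continuous_on UNIV (\<lambda>U::mat2. U a b)"
    by (rule continuous_on_product_then_coordinatewise[OF continuous_on_product_coordinates])
  have "(\<lambda>U::mat2. U a b) \<in> borel_measurable (restrict_space borel unitary2)"
    by (intro measurable_restrict_space1 borel_measurable_continuous_onI c)
  then have e: "(\<lambda>U::mat2. U a b) \<in> borel_measurable \<mu>"
  proof -
    have s: "sets \<mu> = sets (restrict_space borel unitary2)" using H by (simp add: haar_U2_def)
    show ?thesis unfolding measurable_cong_sets[OF s refl] by fact
  qed
  show ?thesis unfolding Ulaw_def
    by (rule measurable_compose[OF measurable_component_singleton[OF i] e])
qed

lemma meas_sum_if:
  fixes M :: "'a measure" and F :: "'a \<Rightarrow> (nat \<Rightarrow> bool) \<Rightarrow> real"
  assumes N: "\<And>x. (\<lambda>Us. F Us x) \<in> borel_measurable M"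
  shows "(\<lambda>Us. \<Sum>x\<in>basis n. if (\<forall>i\<in>S. x i = z i) then F Us x else 0) \<in> borel_measurable M"
proof (rule borel_measurable_sum)
  fix x show "(\<lambda>Us. if (\<forall>i\<in>S. x i = z i) then F Us x else 0) \<in> borel_measurable M"
  proof (cases "\<forall>i\<in>S. x i = z i")
    case True show ?thesis unfolding if_P[OF True] by (rule N)
  next
    case False show ?thesis unfolding if_not_P[OF False] by (rule borel_measurable_const)
  qed
qed

lemma PU_meas:
  assumes H: "haar_U2 \<mu>" and psi: "\<forall>x\<in>basis n. \<forall>y\<in>basis n. \<rho> x y = \<psi> x * cnj (\<psi> y)"
  shows "(\<lambda>Us. PU n S \<rho> Us z) \<in> borel_measurable (Ulaw \<mu> S)"
proof -
  have T: "(\<lambda>Us. tensorU n S Us x c) \<in> borel_measurable (Ulaw \<mu> S)" for x c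
    unfolding tensorU_def
    by (rule borel_measurable_times, rule borel_measurable_prod, erule entry_meas[OF H], rule borel_measurable_const)
  have Phi: "(\<lambda>Us. phi n S Us \<psi> x) \<in> borel_measurable (Ulaw \<mu> S)" for x
    unfolding phi_def
    by (rule borel_measurable_sum, rule borel_measurable_times, rule T, rule borel_measurable_const)
  have cm: "(\<lambda>w::complex. (cmod w)^2) \<in> borel_measurable borel"
    by (intro borel_measurable_continuous_onI continuous_intros)
  have N: "(\<lambda>Us. (cmod (phi n S Us \<psi> x))^2) \<in> borel_measurable (Ulaw \<mu> S)" for x
    by (rule measurable_compose[OF Phi[of x] cm])
  have eq: "(\<lambda>Us. PU n S \<rho> Us z) = (\<lambda>Us. \<Sum>x\<in>basis n. if (\<forall>i\<in>S. x i = z i) then (cmod (phi n S Us \<psi> x))^2 else 0)"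
    by (rule ext) (rule PU_formula[OF psi])
  show ?thesis unfolding eq by (rule meas_sum_if[OF N])
qed

lemma finite_outcomes: "finite S \<Longrightarrow> finite (outcomes S)"
proof -
  assume fS: "finite S"
  have "outcomes S \<subseteq> (\<lambda>A i. i \<in> A) ` Pow S"
  proof
    fix x assume "x \<in> outcomes S"
    then have "x = (\<lambda>i. i \<in> {i. x i})" "{i. x i} \<in> Pow S" by (auto simp: outcomes_def)
    then show "x \<in> (\<lambda>A i. i \<in> A) ` Pow S" by blast
  qed
  then show ?thesis using fS finite_subset by blast
qed

definition kern :: "mat2 measure \<Rightarrow> nat \<Rightarrow> nat set \<Rightarrow> qmat \<Rightarrow> nat \<Rightarrow> (nat \<Rightarrow> mat2) \<Rightarrow>
    ((nat \<Rightarrow> mat2) \<times> (nat \<Rightarrow> nat \<Rightarrow> bool)) measure" where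
  "kern \<mu> n S \<rho> K = (\<lambda>Us. distr (PiM {1..K} (\<lambda>_. outcome_law n S \<rho> Us))
        (Ulaw \<mu> S \<Otimes>\<^sub>M PiM {1..K} (\<lambda>_. count_space (outcomes S)))
        (\<lambda>Zs. (Us, Zs)))"

lemma joint_law_kern: "joint_law \<mu> n S \<rho> K = Ulaw \<mu> S \<bind> kern \<mu> n S \<rho> K"
  unfolding joint_law_def kern_def ..

locale qsetup =
  fixes \<mu> :: "mat2 measure" and n :: nat and S :: "nat set" and \<rho> :: qmat and \<psi> :: "(nat \<Rightarrow> bool) \<Rightarrow> complex"
  assumes H: "haar_U2 \<mu>" and Ssub: "S \<subseteq> {1..n}"
    and psi: "\<forall>x\<in>basis n. \<forall>y\<in>basis n. \<rho> x y = \<psi> x * cnj (\<psi> y)"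
    and norm: "(\<Sum>x\<in>basis n. (cmod (\<psi> x))\<^sup>2) = 1"
begin

abbreviation "M \<equiv> Ulaw \<mu> S"
abbreviation "\<Omega> \<equiv> outcomes S"
abbreviation "NN I \<equiv> PiM I (\<lambda>_. count_space \<Omega>)"
abbreviation "p Us \<equiv> PU n S \<rho> Us"

lemma fS: "finite S" using Ssub finite_subset by blast
lemma fO: "finite \<Omega>" using finite_outcomes[OF fS] .
lemma p0: "p Us z \<ge> 0" using PU_nonneg[OF psi] .
lemma p1: "Us \<in> space M \<Longrightarrow> (\<Sum>z\<in>\<Omega>. p Us z) = 1"
  using PU_sum[OF psi norm Ssub] space_Ulaw[OF H] by (auto simp: PiE_iff)
lemma pm[measurable]: "(\<lambda>Us. p Us z) \<in> borel_measurable M" using PU_meas[OF H psi] .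

lemma law_eq:
  assumes "finite I" "Us \<in> space M"
  shows "PiM I (\<lambda>_. outcome_law n S \<rho> Us) = density (count_space (PiE I (\<lambda>_. \<Omega>))) (\<lambda>Zs. ennreal (\<Prod>k\<in>I. p Us (Zs k)))"
  unfolding outcome_law_def using PiM_discrete[OF assms(1) fO, of "p Us"] p0 p1[OF assms(2)] by simp

lemma sets_NN: "finite I \<Longrightarrow> sets (NN I) = Pow (PiE I (\<lambda>_. \<Omega>))"
  using sets_PiM_count[OF _ fO] .

lemma sets_law: "finite I \<Longrightarrow> Us \<in> space M \<Longrightarrow> sets (PiM I (\<lambda>_. outcome_law n S \<rho> Us)) = sets (NN I)"
  by (simp add: law_eq sets_NN)

lemma space_NN: "space (NN I) = PiE I (\<lambda>_. \<Omega>)"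
  by (simp add: space_PiM)

lemma pair_meas:
  assumes "finite I" "Us \<in> space M"
  shows "(\<lambda>Zs. (Us, Zs)) \<in> measurable (PiM I (\<lambda>_. outcome_law n S \<rho> Us)) (M \<Otimes>\<^sub>M NN I)"
  by (intro measurable_Pair measurable_const assms(2) measurable_ident_sets sets_law assms)

lemma kern_prob:
  assumes "finite I" "Us \<in> space M"
  shows "prob_space (distr (PiM I (\<lambda>_. outcome_law n S \<rho> Us)) (M \<Otimes>\<^sub>M NN I) (\<lambda>Zs. (Us, Zs)))"
proof -
  have "prob_space (PiM I (\<lambda>_. outcome_law n S \<rho> Us))"
    unfolding outcome_law_def
    by (intro prob_space_PiM prob_space_discrete[OF fO] p0 p1[OF assms(2)])
  then show ?thesis using pair_meas[OF assms] by (rule prob_space.prob_space_distr)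
qed

lemma kern_emeasure:
  assumes "finite I" "Us \<in> space M" "A \<in> sets (M \<Otimes>\<^sub>M NN I)"
  shows "emeasure (distr (PiM I (\<lambda>_. outcome_law n S \<rho> Us)) (M \<Otimes>\<^sub>M NN I) (\<lambda>Zs. (Us, Zs))) A =
    (\<Sum>Zs\<in>PiE I (\<lambda>_. \<Omega>). ennreal (\<Prod>k\<in>I. p Us (Zs k)) * indicator A (Us, Zs))"
proof -
  let ?P = "PiE I (\<lambda>_. \<Omega>)"
  let ?B = "(\<lambda>Zs. (Us, Zs)) -` A \<inter> ?P"
  have fP: "finite ?P" using assms(1) fO by (simp add: finite_PiE)
  have "emeasure (distr (PiM I (\<lambda>_. outcome_law n S \<rho> Us)) (M \<Otimes>\<^sub>M NN I) (\<lambda>Zs. (Us, Zs))) A =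
      emeasure (PiM I (\<lambda>_. outcome_law n S \<rho> Us)) ((\<lambda>Zs. (Us, Zs)) -` A \<inter> space (PiM I (\<lambda>_. outcome_law n S \<rho> Us)))"
    by (rule emeasure_distr[OF pair_meas[OF assms(1,2)] assms(3)])
  also have "\<dots> = emeasure (density (count_space ?P) (\<lambda>Zs. ennreal (\<Prod>k\<in>I. p Us (Zs k)))) ?B"
    unfolding law_eq[OF assms(1,2)] by simp
  also have "\<dots> = (\<integral>\<^sup>+ Zs. ennreal (\<Prod>k\<in>I. p Us (Zs k)) * indicator ?B Zs \<partial>count_space ?P)"
    by (intro emeasure_density) auto
  also have "\<dots> = (\<Sum>Zs\<in>?P. ennreal (\<Prod>k\<in>I. p Us (Zs k)) * indicator ?B Zs)"
    using fP by (simp add: nn_integral_count_space_finite)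
  also have "\<dots> = (\<Sum>Zs\<in>?P. ennreal (\<Prod>k\<in>I. p Us (Zs k)) * indicator A (Us, Zs))"
    by (intro sum.cong refl) (auto simp: indicator_def)
  finally show ?thesis .
qed

lemma kern_meas:
  assumes I: "finite I"
  shows "(\<lambda>Us. distr (PiM I (\<lambda>_. outcome_law n S \<rho> Us)) (M \<Otimes>\<^sub>M NN I) (\<lambda>Zs. (Us, Zs))) \<in> measurable M (subprob_algebra (M \<Otimes>\<^sub>M NN I))"
proof (rule measurable_subprob_algebra)
  fix Us assume Us: "Us \<in> space M"
  show "subprob_space (distr (PiM I (\<lambda>_. outcome_law n S \<rho> Us)) (M \<Otimes>\<^sub>M NN I) (\<lambda>Zs. (Us, Zs)))"
    by (rule prob_space_imp_subprob_space[OF kern_prob[OF I Us]])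
  show "sets (distr (PiM I (\<lambda>_. outcome_law n S \<rho> Us)) (M \<Otimes>\<^sub>M NN I) (\<lambda>Zs. (Us, Zs))) = sets (M \<Otimes>\<^sub>M NN I)"
    by simp
next
  fix A assume A: "A \<in> sets (M \<Otimes>\<^sub>M NN I)"
  have m: "(\<lambda>Us. \<Sum>Zs\<in>PiE I (\<lambda>_. \<Omega>). ennreal (\<Prod>k\<in>I. p Us (Zs k)) * indicator A (Us, Zs)) \<in> borel_measurable M"
  proof (rule borel_measurable_sum)
    fix Zs assume Zs: "Zs \<in> PiE I (\<lambda>_. \<Omega>)"
    have pairm: "(\<lambda>Us. (Us, Zs)) \<in> measurable M (M \<Otimes>\<^sub>M NN I)"
      using Zs by (intro measurable_Pair measurable_ident_sets refl measurable_const) (simp add: space_PiM)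
    have ind: "(\<lambda>Us. indicator A (Us, Zs)) \<in> borel_measurable M"
      using measurable_compose[OF pairm borel_measurable_indicator[OF A]] .
    have pr: "(\<lambda>Us. ennreal (\<Prod>k\<in>I. p Us (Zs k))) \<in> borel_measurable M"
      by measurable
    show "(\<lambda>Us. ennreal (\<Prod>k\<in>I. p Us (Zs k)) * indicator A (Us, Zs)) \<in> borel_measurable M"
      using pr ind by (rule borel_measurable_times_ennreal)
  qed
  show "(\<lambda>Us. emeasure (distr (PiM I (\<lambda>_. outcome_law n S \<rho> Us)) (M \<Otimes>\<^sub>M NN I) (\<lambda>Zs. (Us, Zs))) A) \<in> borel_measurable M"
    using m by (rule measurable_cong[THEN iffD1, rotated]) (simp add: kern_emeasure[OF I _ A])
qed

lemma kern_integral: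
  fixes f :: "_ \<Rightarrow> real"
  assumes I: "finite I" and Us: "Us \<in> space M" and f: "f \<in> borel_measurable (M \<Otimes>\<^sub>M NN I)"
  shows "integral\<^sup>L (distr (PiM I (\<lambda>_. outcome_law n S \<rho> Us)) (M \<Otimes>\<^sub>M NN I) (\<lambda>Zs. (Us, Zs))) f
     = (\<Sum>Zs\<in>PiE I (\<lambda>_. \<Omega>). (\<Prod>k\<in>I. p Us (Zs k)) * f (Us, Zs))"
proof -
  let ?P = "PiE I (\<lambda>_. \<Omega>)"
  have fP: "finite ?P" using I fO by (simp add: finite_PiE)
  have "integral\<^sup>L (distr (PiM I (\<lambda>_. outcome_law n S \<rho> Us)) (M \<Otimes>\<^sub>M NN I) (\<lambda>Zs. (Us, Zs))) f
     = integral\<^sup>L (PiM I (\<lambda>_. outcome_law n S \<rho> Us)) (\<lambda>Zs. f (Us, Zs))"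
    by (rule integral_distr[OF pair_meas[OF I Us] f])
  also have "\<dots> = integral\<^sup>L (density (count_space ?P) (\<lambda>Zs. ennreal (\<Prod>k\<in>I. p Us (Zs k)))) (\<lambda>Zs. f (Us, Zs))"
    unfolding law_eq[OF I Us] ..
  also have "\<dots> = integral\<^sup>L (count_space ?P) (\<lambda>Zs. (\<Prod>k\<in>I. p Us (Zs k)) *\<^sub>R f (Us, Zs))"
    by (intro integral_density) (auto intro: prod_nonneg p0)
  also have "\<dots> = (\<Sum>Zs\<in>?P. (\<Prod>k\<in>I. p Us (Zs k)) * f (Us, Zs))"
    using fP by (simp add: lebesgue_integral_count_space_finite)
  finally show ?thesis .
qed

end

lemma EE_var:
  "EE I \<Omega> p (\<lambda>Zs. (F Zs - m)^2) = EE I \<Omega> p (\<lambda>Zs. (F Zs)^2) - 2 * m * EE I \<Omega> p F + m^2 * EE I \<Omega> p (\<lambda>_. 1)"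
  unfolding EE_def by (simp add: power2_diff sum_subtractf sum.distrib sum_distrib_left algebra_simps)

lemma Shat_bounds:
  assumes K: "K \<ge> 2"
  shows "0 \<le> Shat K Zs" "Shat K Zs \<le> 1"
proof -
  define I where "I = {1..K}"
  have I: "finite I" "1 \<in> I" and cI: "card I = K" using K by (auto simp: I_def)
  have Kpos: "real K * (real K - 1) > 0" using K by simp
  have S: "Shat K Zs = (\<Sum>a\<in>I. \<Sum>b\<in>I-{a}. (if Zs a = Zs b then 1 else 0)) / (real K * (real K - 1))"
    unfolding Shat_def I_def by simp
  have le: "(\<Sum>a\<in>I. \<Sum>b\<in>I-{a}. (if Zs a = Zs b then 1 else 0::real)) \<le> (\<Sum>a\<in>I. \<Sum>b\<in>I-{a}. 1)"
    by (intro sum_mono) auto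
  also have "\<dots> = real K * (real K - 1)" using cnt0[OF I] cI by simp
  finally show "Shat K Zs \<le> 1" unfolding S using Kpos by simp
  show "0 \<le> Shat K Zs" unfolding S using Kpos by (intro divide_nonneg_pos sum_nonneg) auto
qed

context qsetup
begin

lemma probM: "prob_space M"
  unfolding Ulaw_def using H unfolding haar_U2_def by (intro prob_space_PiM) auto

lemma meas_NN: "finite I \<Longrightarrow> (f :: _ \<Rightarrow> real) \<in> borel_measurable (NN I)"
proof -
  assume I: "finite I"
  have s: "sets (NN I) = sets (count_space (PiE I (\<lambda>_. \<Omega>)))" using sets_NN[OF I] by simp
  have e: "borel_measurable (NN I) = borel_measurable (count_space (PiE I (\<lambda>_. \<Omega>)))"
    by (rule measurable_cong_sets[OF s refl])
  show ?thesis unfolding e by simp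
qed

lemma J_integral:
  fixes g :: "_ \<Rightarrow> real"
  assumes K: "K \<ge> 2" and g: "g \<in> borel_measurable (M \<Otimes>\<^sub>M NN {1..K})"
    and gB: "\<And>x. \<bar>g x\<bar> \<le> B"
  shows "integral\<^sup>L (joint_law \<mu> n S \<rho> K) g = (\<integral>Us. EE {1..K} \<Omega> (p Us) (\<lambda>Zs. g (Us, Zs)) \<partial>M)"
proof -
  interpret PM: prob_space M by (rule probM)
  have I: "finite {1..K}" by simp
  have "integral\<^sup>L (joint_law \<mu> n S \<rho> K) g = (\<integral>Us. integral\<^sup>L (kern \<mu> n S \<rho> K Us) g \<partial>M)"
    unfolding joint_law_kern
  proof (rule integral_bind[OF g])
    show "\<And>x. x \<in> space (M \<Otimes>\<^sub>M NN {1..K}) \<Longrightarrow> \<bar>g x\<bar> \<le> B" using gB by simp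
    show "kern \<mu> n S \<rho> K \<in> measurable M (subprob_algebra (M \<Otimes>\<^sub>M NN {1..K}))"
      unfolding kern_def by (rule kern_meas[OF I])
    show "finite_measure M" by (rule PM.finite_measure_axioms)
    show "AE x in M. emeasure (kern \<mu> n S \<rho> K x) (space (kern \<mu> n S \<rho> K x)) \<le> ennreal 1"
    proof (intro AE_I2)
      fix x assume x: "x \<in> space M"
      show "emeasure (kern \<mu> n S \<rho> K x) (space (kern \<mu> n S \<rho> K x)) \<le> ennreal 1"
        unfolding kern_def prob_space.emeasure_space_1[OF kern_prob[OF I x]] by simp
    qed
  qed
  also have "\<dots> = (\<integral>Us. EE {1..K} \<Omega> (p Us) (\<lambda>Zs. g (Us, Zs)) \<partial>M)"
  proof (intro Bochner_Integration.integral_cong refl)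
    fix Us assume Us: "Us \<in> space M"
    show "integral\<^sup>L (kern \<mu> n S \<rho> K Us) g = EE {1..K} \<Omega> (p Us) (\<lambda>Zs. g (Us, Zs))"
      unfolding kern_def EE_def by (rule kern_integral[OF I Us g])
  qed
  finally show ?thesis .
qed

lemma main:
  assumes K: "K \<ge> 2"
  defines "c \<equiv> \<lambda>Us. (\<Sum>z\<in>\<Omega>. (p Us z)^2)" and "t \<equiv> \<lambda>Us. (\<Sum>z\<in>\<Omega>. (p Us z)^3)"
  shows "variance_of (joint_law \<mu> n S \<rho> K) (\<lambda>\<omega>. Shat K (snd \<omega>)) =
     (2 * integral\<^sup>L M c + 4 * (real K - 2) * integral\<^sup>L M t + (real K - 2) * (real K - 3) * (\<integral>Us. (c Us)^2 \<partial>M))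
        / (real K * (real K - 1)) - (integral\<^sup>L M c)^2"
proof -
  interpret PM: prob_space M by (rule probM)
  have I: "finite {1..K}" by simp
  have hm: "(\<lambda>\<omega>. Shat K (snd \<omega>)) \<in> borel_measurable (M \<Otimes>\<^sub>M NN {1..K})"
    by (rule measurable_compose[OF measurable_snd meas_NN[OF I]])
  have ple1: "p Us z \<le> 1" if "Us \<in> space M" "z \<in> \<Omega>" for Us z
    using member_le_sum[of z \<Omega> "p Us"] p0 p1[OF that(1)] that(2) fO by auto
  have cB: "\<bar>c Us\<bar> \<le> real (card \<Omega>)" "\<bar>t Us\<bar> \<le> real (card \<Omega>)" if "Us \<in> space M" for Us
  proof -
    have "c Us \<le> (\<Sum>z\<in>\<Omega>. 1)" unfolding c_def using ple1[OF that] p0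
      by (intro sum_mono) (simp add: power_le_one)
    moreover have "c Us \<ge> 0" unfolding c_def by (intro sum_nonneg) simp
    ultimately show "\<bar>c Us\<bar> \<le> real (card \<Omega>)" by simp
    have "t Us \<le> (\<Sum>z\<in>\<Omega>. 1)" unfolding t_def using ple1[OF that] p0
      by (intro sum_mono) (simp add: power_le_one)
    moreover have "t Us \<ge> 0" unfolding t_def using p0 by (intro sum_nonneg) simp
    ultimately show "\<bar>t Us\<bar> \<le> real (card \<Omega>)" by simp
  qed
  have cm: "c \<in> borel_measurable M" "t \<in> borel_measurable M" unfolding c_def t_def by measurable
  have ic: "integrable M c" using cB(1) cm(1) by (intro PM.integrable_const_bound[where B="real (card \<Omega>)"]) (auto intro: AE_I2)
  have it: "integrable M t" using cB(2) cm(2) by (intro PM.integrable_const_bound[where B="real (card \<Omega>)"]) (auto intro: AE_I2)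
  have ic2: "integrable M (\<lambda>Us. (c Us)^2)"
  proof (intro PM.integrable_const_bound[where B="real (card \<Omega>)^2"] AE_I2)
    fix Us assume "Us \<in> space M"
    then have "\<bar>c Us\<bar> \<le> \<bar>real (card \<Omega>)\<bar>" using cB(1) by simp
    then show "norm ((c Us)^2) \<le> real (card \<Omega>)^2"
      unfolding abs_le_square_iff by simp
  qed (use cm in measurable)
  have Kpos: "real K * (real K - 1) > 0" using K by simp
  define P2 where "P2 = integral\<^sup>L M c"
  have mean: "integral\<^sup>L (joint_law \<mu> n S \<rho> K) (\<lambda>\<omega>. Shat K (snd \<omega>)) = P2"
  proof -
    have "integral\<^sup>L (joint_law \<mu> n S \<rho> K) (\<lambda>\<omega>. Shat K (snd \<omega>)) = (\<integral>Us. EE {1..K} \<Omega> (p Us) (Shat K) \<partial>M)"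
      using J_integral[OF K hm, of 1] Shat_bounds[OF K] by simp
    also have "\<dots> = P2" unfolding P2_def c_def
      using Shat_moments(1)[OF K fO p1] by (intro Bochner_Integration.integral_cong refl) auto
    finally show ?thesis .
  qed
  have "variance_of (joint_law \<mu> n S \<rho> K) (\<lambda>\<omega>. Shat K (snd \<omega>)) =
      integral\<^sup>L (joint_law \<mu> n S \<rho> K) (\<lambda>\<omega>. (Shat K (snd \<omega>) - P2)^2)"
    unfolding variance_of_def mean ..
  also have "\<dots> = (\<integral>Us. EE {1..K} \<Omega> (p Us) (\<lambda>Zs. (Shat K Zs - P2)^2) \<partial>M)"
  proof -
    have b: "\<bar>(Shat K (snd x) - P2)^2\<bar> \<le> (1 + \<bar>P2\<bar>)^2" for x
    proof -
      have "\<bar>Shat K (snd x) - P2\<bar> \<le> 1 + \<bar>P2\<bar>" using Shat_bounds[OF K, of "snd x"] by linarith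
      then have "(Shat K (snd x) - P2)^2 \<le> (1 + \<bar>P2\<bar>)^2"
        using abs_le_square_iff[of "Shat K (snd x) - P2" "1 + \<bar>P2\<bar>"] by simp
      then show ?thesis by simp
    qed
    have gm: "(\<lambda>\<omega>. (Shat K (snd \<omega>) - P2)^2) \<in> borel_measurable (M \<Otimes>\<^sub>M NN {1..K})"
      by (rule measurable_compose[OF measurable_snd meas_NN[OF I]])
    show ?thesis using J_integral[OF K gm b] by simp
  qed
  also have "\<dots> = (\<integral>Us. (2 * c Us + 4 * (real K - 2) * t Us + (real K - 2) * (real K - 3) * (c Us)^2) / (real K * (real K - 1))
       - 2 * P2 * c Us + P2^2 \<partial>M)"
  proof (intro Bochner_Integration.integral_cong refl)
    fix Us assume Us: "Us \<in> space M"
    show "EE {1..K} \<Omega> (p Us) (\<lambda>Zs. (Shat K Zs - P2)^2) = (2 * c Us + 4 * (real K - 2) * t Us + (real K - 2) * (real K - 3) * (c Us)^2) / (real K * (real K - 1))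
       - 2 * P2 * c Us + P2^2"
      unfolding EE_var Shat_moments[OF K fO p1[OF Us]] EE_one[OF I fO p1[OF Us]] c_def t_def by simp
  qed
  also have "\<dots> = (2 * integral\<^sup>L M c + 4 * (real K - 2) * integral\<^sup>L M t + (real K - 2) * (real K - 3) * (\<integral>Us. (c Us)^2 \<partial>M))
        / (real K * (real K - 1)) - 2 * P2 * P2 + P2^2"
  proof -
    have "(\<integral>Us. (2 * c Us + 4 * (real K - 2) * t Us + (real K - 2) * (real K - 3) * (c Us)^2) / (real K * (real K - 1))
       - 2 * P2 * c Us + P2^2 \<partial>M) = (\<integral>Us. (2 / (real K * (real K - 1))) * c Us + (4 * (real K - 2) / (real K * (real K - 1))) * t Us
          + ((real K - 2) * (real K - 3) / (real K * (real K - 1))) * (c Us)^2 + (- 2 * P2) * c Us + P2^2 \<partial>M)"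
      by (intro Bochner_Integration.integral_cong refl) (simp add: add_divide_distrib)
    also have "\<dots> = (2 / (real K * (real K - 1))) * integral\<^sup>L M c + (4 * (real K - 2) / (real K * (real K - 1))) * integral\<^sup>L M t
          + ((real K - 2) * (real K - 3) / (real K * (real K - 1))) * (\<integral>Us. (c Us)^2 \<partial>M) + (- 2 * P2) * integral\<^sup>L M c + P2^2"
      using ic it ic2 PM.prob_space by simp
    finally show ?thesis unfolding P2_def by (simp add: add_divide_distrib)
  qed
  finally show ?thesis unfolding P2_def by (simp add: power2_eq_square)
qed

end

lemma final_alg:
  fixes x a b d :: real
  assumes "x * (x - 1) > 0"
  shows "(2 * a + 4 * (x - 2) * b + (x - 2) * (x - 3) * d) / (x * (x - 1)) - a^2 =
    (2 * a * (1 - a) + 4 * (x - 2) * (b - a^2)) / (x * (x - 1)) + ((x - 2) * (x - 3) * (d - a^2)) / (x * (x - 1))"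
proof -
  have D: "x * (x - 1) \<noteq> 0" using assms by (metis less_irrefl)
  have "a^2 = (a^2 * (x * (x - 1))) / (x * (x - 1))" using D by simp
  then have "(2 * a + 4 * (x - 2) * b + (x - 2) * (x - 3) * d) / (x * (x - 1)) - a^2 =
     (2 * a + 4 * (x - 2) * b + (x - 2) * (x - 3) * d - a^2 * (x * (x - 1))) / (x * (x - 1))"
    by (metis diff_divide_distrib)
  also have "2 * a + 4 * (x - 2) * b + (x - 2) * (x - 3) * d - a^2 * (x * (x - 1)) =
     (2 * a * (1 - a) + 4 * (x - 2) * (b - a^2)) + ((x - 2) * (x - 3) * (d - a^2))"
    by (simp add: algebra_simps power2_eq_square)
  finally show ?thesis by (simp add: add_divide_distrib)
qed

theorem lemma2:
  fixes n K :: nat and S :: "nat set" and \<rho> :: qmat and \<mu> :: "mat2 measure"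
  assumes "pure_state n \<rho>"
    and "S \<subseteq> {1..n}" and "S \<noteq> {}"
    and "K \<ge> 2"
    and "haar_U2 \<mu>"
  defines "P2 \<equiv> \<integral>Us. (\<Sum>z\<in>outcomes S. (PU n S \<rho> Us z)^2) \<partial>Ulaw \<mu> S"
    and "P3 \<equiv> \<integral>Us. (\<Sum>z\<in>outcomes S. (PU n S \<rho> Us z)^3) \<partial>Ulaw \<mu> S"
    and "P22 \<equiv> \<integral>Us. (\<Sum>z\<in>outcomes S. (PU n S \<rho> Us z)^2)^2 \<partial>Ulaw \<mu> S"
  shows "variance_of (joint_law \<mu> n S \<rho> K) (\<lambda>\<omega>. Shat K (snd \<omega>)) =
     (2 * P2 * (1 - P2) + 4 * (real K - 2) * (P3 - P2^2)) / (real K * (real K - 1))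
     + ((real K - 2) * (real K - 3) * (P22 - P2^2)) / (real K * (real K - 1))"
proof -
  from assms(1) obtain \<psi> where norm: "(\<Sum>x\<in>basis n. (cmod (\<psi> x))\<^sup>2) = 1"
    and psi: "\<forall>x\<in>basis n. \<forall>y\<in>basis n. \<rho> x y = \<psi> x * cnj (\<psi> y)"
    unfolding pure_state_def by blast
  interpret qsetup \<mu> n S \<rho> \<psi>
    using assms(5) assms(2) psi norm by unfold_locales
  have Kpos: "real K * (real K - 1) > 0" using assms(4) by simp
  have "variance_of (joint_law \<mu> n S \<rho> K) (\<lambda>\<omega>. Shat K (snd \<omega>)) =
     (2 * P2 + 4 * (real K - 2) * P3 + (real K - 2) * (real K - 3) * P22) / (real K * (real K - 1)) - P2^2"
    using main[OF assms(4)] unfolding P2_def P3_def P22_def by simp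
  also have "\<dots> = (2 * P2 * (1 - P2) + 4 * (real K - 2) * (P3 - P2^2)) / (real K * (real K - 1))
     + ((real K - 2) * (real K - 3) * (P22 - P2^2)) / (real K * (real K - 1))"
    by (rule final_alg[OF Kpos])
  finally show ?thesis .
qed

end
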